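(* For an integer $d\geqslant 0$ and a real $x>0$, let $K_d(x)$ be the largest integer $k$ such that $(k-d)k\leqslant dx$; equivalently $K_d(x)=\lfloor (d+\sqrt{d^2+4dx})/2\rfloor$. Then for integers $d$ and reals $x$ with $0\leqslant d\leqslant x$ and $x\geqslant 1$, $$\sum_{K_{d}(x)<k\leqslant K_{d+1}(x)}k^2=\frac{(d+1)\sqrt{d+1}-d\sqrt{d}}{3}\,x^{3/2}+O\bigl((d+1)x\bigr),$$ the sum being over integers $k$, with an absolute implied constant.
   Context: $\lfloor t\rfloor$ denotes the integer part of the real number $t$. *)

theory Defs
  imports Complex_Main
begin

definition K :: "nat \<Rightarrow> real \<Rightarrow> int" where
  "K d x = (GREATEST k::int. (real_of_int k - real d) * real_of_int k \<le> real d * x)"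

end

theory Submission
  imports Defs
begin

lemma P_bounds:
  fixes u v w :: real
  assumes u: "u > 0" and v: "v \<ge> 1" and uv: "u^2 \<le> 2*v^2" and w: "w > 0" and ww: "w^2 = u^2 + 4*v^2"
  shows "0 \<le> 3*(u+w)^4 - 24*w*v^3" and "3*(u+w)^4 - 24*w*v^3 \<le> 1600*u*v^3"
proof -
  have w2: "w \<ge> 2*v"
  proof -
    have "(2*v)^2 \<le> w^2" using ww u by (simp add: power2_eq_square)
    then show ?thesis by (rule power2_le_imp_le) (use w in auto)
  qed
  have w3: "w \<le> 3*v"
  proof -
    have vv: "v^2 \<ge> 0" by simp
    have "w^2 \<le> 9*v^2" using ww uv vv by linarith
    then have "w^2 \<le> (3*v)^2" by (simp add: power_mult_distrib)
    then show ?thesis by (rule power2_le_imp_le) (use v in auto)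
  qed
  have u2: "u \<le> 2*v"
  proof -
    have "u^2 \<le> 4*v^2" using uv zero_le_power2[of v] by linarith
    then have "u^2 \<le> (2*v)^2" by (simp add: power_mult_distrib)
    then show ?thesis by (rule power2_le_imp_le) (use v in auto)
  qed
  have a: "w^3 \<ge> (2*v)^3" using w2 by (rule power_mono) (use v in auto)
  have b: "(u+w)^4 \<ge> w^4" by (rule power_mono) (use u w in auto)
  show "0 \<le> 3*(u+w)^4 - 24*w*v^3"
  proof -
    have "w^4 = w * w^3" by (simp add: power_numeral_reduce)
    also have "\<dots> \<ge> w * (8*v^3)" using a w by (intro mult_left_mono) (auto simp: power_mult_distrib)
    finally show ?thesis using b by linarith
  qed
  have c: "(u+w)^4 - w^4 = u * ((u+w)^3 + (u+w)^2*w + (u+w)*w^2 + w^3)"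
    by (simp add: algebra_simps power_numeral_reduce)
  have h: "u + w \<le> 5*v" using u2 w3 by linarith
  have c2: "(u+w)^3 + (u+w)^2*w + (u+w)*w^2 + w^3 \<le> 4*(5*v)^3"
  proof -
    have w5: "w \<le> 5*v" using w3 v by linarith
    have p3: "(u+w)^3 \<le> (5*v)^3" using h by (rule power_mono) (use u w in auto)
    have p2: "(u+w)^2 \<le> (5*v)^2" using h by (rule power_mono) (use u w in auto)
    have q2: "w^2 \<le> (5*v)^2" using w5 by (rule power_mono[of w "5*v"]) (use w v in auto)
    have q3: "w^3 \<le> (5*v)^3" using w5 by (rule power_mono[of w "5*v"]) (use w v in auto)
    have "(u+w)^2*w \<le> (5*v)^2*(5*v)" using p2 w5 by (rule mult_mono) (use w in auto)
    moreover have "(u+w)*w^2 \<le> (5*v)*(5*v)^2" using h q2 by (rule mult_mono) (use u w v in auto)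
    ultimately show ?thesis using p3 q3 by (simp add: power_numeral_reduce algebra_simps)
  qed
  have d1: "(u+w)^4 - w^4 \<le> 500 * u * v^3"
  proof -
    have "(u+w)^4 - w^4 \<le> u * (4*(5*v)^3)" unfolding c using c2 u by (intro mult_left_mono) auto
    then show ?thesis by (simp add: power_mult_distrib)
  qed
  have e: "(w - 2*v) * (w + 2*v) = u^2" using ww by (simp add: algebra_simps power2_eq_square)
  have e2: "w - 2*v \<le> u/2"
  proof -
    have "(w - 2*v) * (4*v) \<le> (w - 2*v) * (w + 2*v)" using w2 by (intro mult_left_mono) auto
    also have "\<dots> = u^2" by (rule e)
    also have "\<dots> \<le> u * (2*v)" using u2 u by (simp add: power2_eq_square)
    finally have "(w - 2*v) * (4*v) \<le> (u/2) * (4*v)" by simp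
    then show ?thesis using v by simp
  qed
  have f: "w^4 - 8*w*v^3 = w * (w - 2*v) * (w^2 + 2*v*w + 4*v^2)"
    by (simp add: algebra_simps power_numeral_reduce)
  have g: "w^2 + 2*v*w + 4*v^2 \<le> 19*v^2"
  proof -
    have "w^2 \<le> (3*v)^2" using w3 by (rule power_mono) (use w in auto)
    moreover have "v*w \<le> v*(3*v)" using w3 v by (intro mult_left_mono) auto
    ultimately show ?thesis by (simp add: power2_eq_square)
  qed
  have f1: "w * (w - 2*v) \<le> (3*v) * (u/2)" using w3 e2 by (rule mult_mono) (use w w2 v in auto)
  have f2: "w * (w - 2*v) * (w^2 + 2*v*w + 4*v^2) \<le> (3*v) * (u/2) * (19*v^2)"
    using f1 g by (rule mult_mono) (use w w2 v u in auto)
  show "3*(u+w)^4 - 24*w*v^3 \<le> 1600*u*v^3"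
  proof -
    have "3*(u+w)^4 - 24*w*v^3 = 3*((u+w)^4 - w^4) + 3*(w^4 - 8*w*v^3)" by simp
    also have "\<dots> \<le> 3*(500*u*v^3) + 3*((3*v) * (u/2) * (19*v^2))"
    proof -
      have B: "w^4 - 8*w*v^3 \<le> (3*v) * (u/2) * (19*v^2)" using f f2 by simp
      show ?thesis using d1 B by (simp only: add_mono mult_left_mono)
    qed
    also have "\<dots> \<le> 1600*u*v^3" using u v by (simp add: power_numeral_reduce algebra_simps)
    finally show ?thesis .
  qed
qed

definition Rf :: "real \<Rightarrow> real \<Rightarrow> real" where "Rf x t = (t + sqrt t * sqrt (t + 4*x))/2"

lemma Rf_nonneg: "t \<ge> 0 \<Longrightarrow> x \<ge> 0 \<Longrightarrow> Rf x t \<ge> 0"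
  unfolding Rf_def by simp

lemma sq_prod: "t \<ge> 0 \<Longrightarrow> x \<ge> 0 \<Longrightarrow> (sqrt t * sqrt (t + 4*x))^2 = t*(t+4*x)"
  by (simp add: power_mult_distrib)

lemma Rf_sq: assumes "t \<ge> 0" "x \<ge> 0" shows "(Rf x t)^2 = t * Rf x t + t * x"
proof -
  have "(sqrt t * sqrt (t + 4*x))^2 = t*(t+4*x)" using assms by (rule sq_prod)
  then show ?thesis unfolding Rf_def by (simp add: power2_eq_square algebra_simps)
qed

lemma Rf_mono: "0 \<le> s \<Longrightarrow> s \<le> t \<Longrightarrow> x \<ge> 0 \<Longrightarrow> Rf x s \<le> Rf x t"
  unfolding Rf_def by (intro divide_right_mono add_mono mult_mono) auto

lemma K_eq: assumes x: "x \<ge> 0" shows "K d x = \<lfloor>Rf x (real d)\<rfloor>"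
proof -
  define s where "s = sqrt (real d) * sqrt (real d + 4*x)"
  define r where "r = Rf x (real d)"
  define r' where "r' = (real d - s)/2"
  have ss: "s^2 = real d * (real d + 4*x)" unfolding s_def using x by (simp add: sq_prod)
  have s0: "s \<ge> 0" unfolding s_def using x by simp
  have rr: "r = (real d + s)/2" unfolding r_def Rf_def s_def by simp
  have fac: "(k - real d) * k - real d * x = (k - r) * (k - r')" for k
  proof -
    have "(k - r) * (k - r') = k^2 - real d * k + ((real d)^2 - s^2)/4"
      unfolding rr r'_def by (simp add: field_simps power2_eq_square)
    then show ?thesis using ss by (simp add: algebra_simps power2_eq_square)
  qed
  have sd: "s \<ge> real d"
  proof -
    have "(real d)^2 \<le> s^2" using ss x by (simp add: power2_eq_square algebra_simps)
    then show ?thesis using s0 by (rule power2_le_imp_le)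
  qed
  have r'0: "r' \<le> 0" unfolding r'_def using sd by simp
  have r0: "r \<ge> 0" unfolding r_def using x by (simp add: Rf_nonneg)
  show ?thesis unfolding K_def r_def[symmetric]
  proof (rule Greatest_equality)
    have f0: "real_of_int \<lfloor>r\<rfloor> \<ge> 0" using r0 by simp
    have "(real_of_int \<lfloor>r\<rfloor> - r) * (real_of_int \<lfloor>r\<rfloor> - r') \<le> 0"
      by (intro mult_nonpos_nonneg) (use r'0 f0 of_int_floor_le[of r] in linarith)+
    then show "(real_of_int \<lfloor>r\<rfloor> - real d) * real_of_int \<lfloor>r\<rfloor> \<le> real d * x"
      using fac[of "real_of_int \<lfloor>r\<rfloor>"] by linarith
  next
    fix y :: int assume "(real_of_int y - real d) * real_of_int y \<le> real d * x"
    then have h: "(real_of_int y - r) * (real_of_int y - r') \<le> 0" using fac[of "real_of_int y"] by linarith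
    have "real_of_int y \<le> r"
    proof (rule ccontr)
      assume "\<not> real_of_int y \<le> r"
      then have "(real_of_int y - r) * (real_of_int y - r') > 0" using r0 r'0 by (intro mult_pos_pos) auto
      then show False using h by linarith
    qed
    then show "y \<le> \<lfloor>r\<rfloor>" by (simp add: le_floor_iff)
  qed
qed

definition S :: "int \<Rightarrow> real" where "S n = real_of_int n * (real_of_int n + 1) * (2 * real_of_int n + 1) / 6"

lemma sum_sq: "a \<le> b \<Longrightarrow> (\<Sum>k\<in>{a<..b}. (real_of_int k)^2) = S b - S a"
proof (induction b rule: int_ge_induct)
  case base then show ?case by simp
next
  case (step i)
  have "{a<..i+1} = insert (i+1) {a<..i}" using step by auto
  then have "(\<Sum>k\<in>{a<..i+1}. (real_of_int k)^2) = (real_of_int (i+1))^2 + (\<Sum>k\<in>{a<..i}. (real_of_int k)^2)"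
    by simp
  then show ?case using step by (simp add: S_def power2_eq_square algebra_simps)
qed

lemma S_approx: assumes "R \<ge> 0" shows "\<bar>S \<lfloor>R\<rfloor> - R^3/3\<bar> \<le> 2*R^2 + R"
proof -
  define n where "n = real_of_int \<lfloor>R\<rfloor>"
  have n0: "n \<ge> 0" "n \<le> R" "R < n + 1" using assms unfolding n_def by auto
  have Sn: "S \<lfloor>R\<rfloor> = n^3/3 + n^2/2 + n/6" unfolding S_def n_def[symmetric]
    by (simp add: algebra_simps power2_eq_square power3_eq_cube)
  have c1: "n^3 \<le> R^3" using n0 by (intro power_mono) auto
  have "R^3 - n^3 = (R - n) * (R^2 + R*n + n^2)" by (simp add: algebra_simps power2_eq_square power3_eq_cube)
  also have "\<dots> \<le> 1 * (R^2 + R*R + R^2)"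
    using n0 by (intro mult_mono add_mono mult_left_mono power_mono) auto
  finally have c2: "R^3 - n^3 \<le> 3*R^2" by (simp add: power2_eq_square)
  have c3: "n^2 \<le> R^2" using n0 by (intro power_mono) auto
  show ?thesis unfolding Sn abs_le_iff using c1 c2 c3 n0 zero_le_power2[of R] zero_le_power2[of n] by linarith
qed

lemma F_deriv: assumes t: "t > 0" and x: "x \<ge> 0"
  shows "((\<lambda>t. Rf x t ^3 - t * sqrt t * (x * sqrt x)) has_real_derivative
     (3 * Rf x t ^2 * ((1 + sqrt (t+4*x)/(2*sqrt t) + sqrt t/(2*sqrt (t+4*x)))/2)
      - (sqrt t + t/(2*sqrt t)) * (x*sqrt x))) (at t)"
proof -
  have p: "t + 4*x > 0" using t x by simp
  have d1: "(sqrt has_real_derivative inverse (sqrt t) / 2) (at t)" using t by (rule DERIV_real_sqrt)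
  have d0: "((\<lambda>t. t + 4*x) has_real_derivative 1) (at t)" 
    using DERIV_add[OF DERIV_ident DERIV_const[of "4*x"]] by simp
  have d2: "((\<lambda>t. sqrt (t + 4*x)) has_real_derivative inverse (sqrt (t+4*x)) / 2 * 1) (at t)"
    by (rule DERIV_chain2[OF DERIV_real_sqrt[OF p] d0])
  have d3: "((\<lambda>t. sqrt t * sqrt (t + 4*x)) has_real_derivative
     sqrt t * (inverse (sqrt (t+4*x)) / 2 * 1) + inverse (sqrt t) / 2 * sqrt (t + 4*x)) (at t)"
    by (rule DERIV_mult'[OF d1 d2])
  have d4: "(Rf x has_real_derivative (1 + (sqrt t * (inverse (sqrt (t+4*x)) / 2 * 1) + inverse (sqrt t) / 2 * sqrt (t + 4*x)))/2) (at t)"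
    unfolding Rf_def[abs_def] by (rule DERIV_cdivide[OF DERIV_add[OF DERIV_ident d3]])
  note d5 = DERIV_power[OF d4, of 3]
  note d6 = DERIV_cmult_right[OF DERIV_mult'[OF DERIV_ident d1], of "x * sqrt x"]
  show ?thesis
    apply (rule DERIV_cong[OF DERIV_diff[OF d5 d6]])
    using t p by (simp add: field_simps)
qed


lemma D_bound:
  fixes u v w :: real
  assumes u: "u > 0" and v: "v \<ge> 1" and uv: "u^2 \<le> 2*v^2" and w: "w > 0" and ww: "w^2 = u^2 + 4*v^2"
  defines "D \<equiv> 3*((u^2+u*w)/2)^2 * ((1 + w/(2*u) + u/(2*w))/2) - (u + u^2/(2*u)) * (v^2*v)"
  shows "0 \<le> D" "D \<le> 50*u^2*v^2"
proof -
  have eq: "D = u * (3*(u+w)^4 - 24*w*v^3) / (16*w)"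
    unfolding D_def using u w by (simp add: field_simps power2_eq_square power3_eq_cube power4_eq_xxxx)
  note P = P_bounds[OF u v uv w ww]
  show "0 \<le> D" unfolding eq using P u w by simp
  have w2: "w \<ge> 2*v"
  proof -
    have "(2*v)^2 \<le> w^2" using ww u by (simp add: power2_eq_square)
    then show ?thesis by (rule power2_le_imp_le) (use w in auto)
  qed
  have "D \<le> u * (1600*u*v^3) / (16*w)" unfolding eq
    using P u w by (intro divide_right_mono mult_left_mono) auto
  also have "\<dots> = 100*u^2*v^3 / w" by (simp add: power2_eq_square)
  also have "\<dots> \<le> 100*u^2*v^3 / (2*v)" using w2 v u by (intro divide_left_mono) auto
  also have "\<dots> = 50*u^2*v^2" using v by (simp add: power2_eq_square power3_eq_cube)
  finally show "D \<le> 50*u^2*v^2" .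
qed

lemma F_diff:
  assumes x: "x \<ge> 1" and d: "real d \<le> x"
  shows "\<bar>Rf x (real d + 1)^3 - Rf x (real d)^3 - ((real d + 1) * sqrt (real d + 1) - real d * sqrt (real d)) * (x * sqrt x)\<bar>
         \<le> 50 * (real d + 1) * x"
proof -
  define F where "F = (\<lambda>t. Rf x t ^3 - t * sqrt t * (x * sqrt x))"
  define D where "D = (\<lambda>t. 3 * Rf x t ^2 * ((1 + sqrt (t+4*x)/(2*sqrt t) + sqrt t/(2*sqrt (t+4*x)))/2)
      - (sqrt t + t/(2*sqrt t)) * (x*sqrt x))"
  have der: "t > 0 \<Longrightarrow> (F has_real_derivative D t) (at t)" for t
    unfolding F_def D_def using F_deriv[of t x] x by simp
  have cont: "continuous_on {real d..real d + 1} F"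
    unfolding F_def Rf_def by (intro continuous_intros) auto
  have dif: "real d < t \<Longrightarrow> t < real d + 1 \<Longrightarrow> F differentiable (at t)" for t
    using der[of t] by (auto simp: real_differentiable_def)
  obtain l z where z: "real d < z" "z < real d + 1" and dz: "(F has_real_derivative l) (at z)"
    and fl: "F (real d + 1) - F (real d) = (real d + 1 - real d) * l"
    using MVT[OF _ cont dif] by auto
  have z0: "z > 0" using z by simp
  have lD: "l = D z" using DERIV_unique[OF dz der[OF z0]] .
  define u where "u = sqrt z"
  define v where "v = sqrt x"
  define w where "w = sqrt (z + 4*x)"
  have u0: "u > 0" unfolding u_def using z0 by simp
  have v1: "v \<ge> 1" unfolding v_def using x by simp
  have w0: "w > 0" unfolding w_def using z0 x by simp
  have zu: "z = u^2" unfolding u_def using z0 by simp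
  have xv: "x = v^2" unfolding v_def using x by simp
  have ww: "w^2 = u^2 + 4*v^2" unfolding w_def using z0 x zu xv by simp
  have uv: "u^2 \<le> 2*v^2" using z d x unfolding zu[symmetric] xv[symmetric] by linarith
  have Rz: "Rf x z = (u^2+u*w)/2" unfolding Rf_def u_def w_def using z0 by simp
  have Dz: "D z = 3*((u^2+u*w)/2)^2 * ((1 + w/(2*u) + u/(2*w))/2) - (u + u^2/(2*u)) * (v^2*v)"
    unfolding D_def Rz u_def[symmetric] v_def[symmetric] w_def[symmetric]
    by (simp only: zu xv)
  note DB = D_bound[OF u0 v1 uv w0 ww]
  have l0: "0 \<le> l" using DB(1) unfolding lD Dz .
  have "l \<le> 50*u^2*v^2" using DB(2) unfolding lD Dz .
  then have l1: "l \<le> 50 * z * x" by (simp add: zu xv)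
  have "50 * z * x \<le> 50 * (real d + 1) * x" using z x by (intro mult_right_mono) auto
  then have "l \<le> 50 * (real d + 1) * x" using l1 by linarith
  moreover have "F (real d + 1) - F (real d) = Rf x (real d + 1)^3 - Rf x (real d)^3 - ((real d + 1) * sqrt (real d + 1) - real d * sqrt (real d)) * (x * sqrt x)"
    unfolding F_def by (simp add: algebra_simps)
  ultimately show ?thesis using fl l0 by simp
qed

lemma R_bound:
  assumes x: "x \<ge> 1" and t: "0 \<le> t" "t \<le> 2*x"
  shows "(Rf x t)^2 \<le> 4*t*x"
proof -
  define R where "R = Rf x t"
  have eq: "R^2 = t*R + t*x" unfolding R_def using t x by (intro Rf_sq) auto
  have "0 \<le> (R - t)^2" by simp
  then have "2*(t*R) \<le> R^2 + t^2" by (simp add: power2_eq_square algebra_simps)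
  then have "R^2 \<le> t^2 + 2*(t*x)" using eq by linarith
  moreover have "t^2 \<le> 2*(t*x)"
  proof -
    have "t*t \<le> t*(2*x)" using t by (intro mult_left_mono) auto
    then show ?thesis by (simp add: power2_eq_square)
  qed
  ultimately show ?thesis unfolding R_def by simp
qed

lemma end_err:
  assumes x: "x \<ge> 1" and t: "0 \<le> t" "t \<le> 2*x" "t \<le> real d + 1"
  shows "\<bar>S \<lfloor>Rf x t\<rfloor> - (Rf x t)^3/3\<bar> \<le> 13 * (real d + 1) * x"
proof -
  define R where "R = Rf x t"
  have R0: "R \<ge> 0" unfolding R_def using t x by (intro Rf_nonneg) auto
  have e: "\<bar>S \<lfloor>R\<rfloor> - R^3/3\<bar> \<le> 2*R^2 + R" using S_approx[OF R0] .
  have r2: "R^2 \<le> 4*t*x" unfolding R_def using R_bound[OF x t(1,2)] .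
  have "R \<le> 1 + R^2"
  proof (cases "R \<le> 1")
    case True then show ?thesis using zero_le_power2[of R] by linarith
  next
    case False then have "R*1 \<le> R*R" by (intro mult_left_mono) auto
    then show ?thesis by (simp add: power2_eq_square)
  qed
  moreover have "4*t*x \<le> 4*(real d + 1)*x" using t x by (simp add: mult_right_mono)
  moreover have "1 * 1 \<le> (real d + 1) * x" using x by (intro mult_mono) auto
  ultimately show ?thesis using e r2 unfolding R_def by linarith
qed

theorem proposition3:
  shows "\<exists>C::real. \<forall>(d::nat) (x::real). 1 \<le> x \<and> real d \<le> x \<longrightarrow>
    \<bar>(\<Sum>k\<in>{K d x<..K (d+1) x}. (real_of_int k)^2)
      - ((real d + 1) * sqrt (real d + 1) - real d * sqrt (real d)) / 3 * x powr (3/2)\<bar>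
    \<le> C * (real d + 1) * x"
proof (intro exI[of _ 100] allI impI)
  fix d :: nat and x :: real
  assume h: "1 \<le> x \<and> real d \<le> x"
  then have x: "1 \<le> x" and d: "real d \<le> x" by auto
  define R0 where "R0 = Rf x (real d)"
  define R1 where "R1 = Rf x (real d + 1)"
  have ka: "K d x = \<lfloor>R0\<rfloor>" unfolding R0_def using x by (intro K_eq) auto
  have kb: "K (d+1) x = \<lfloor>R1\<rfloor>" unfolding R1_def using K_eq[of x "d+1"] x by (simp add: add.commute)
  have ab: "\<lfloor>R0\<rfloor> \<le> \<lfloor>R1\<rfloor>" unfolding R0_def R1_def using x by (intro floor_mono Rf_mono) auto
  have sum: "(\<Sum>k\<in>{K d x<..K (d+1) x}. (real_of_int k)^2) = S \<lfloor>R1\<rfloor> - S \<lfloor>R0\<rfloor>"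
    unfolding ka kb using ab by (rule sum_sq)
  have pw: "x powr (3/2) = x * sqrt x"
  proof -
    have "x powr (3/2) = x powr (1 + 1/2)" by simp
    also have "\<dots> = x * sqrt x" using x by (simp only: powr_add powr_half_sqrt) simp
    finally show ?thesis .
  qed
  have e0: "\<bar>S \<lfloor>R0\<rfloor> - R0^3/3\<bar> \<le> 13 * (real d + 1) * x" unfolding R0_def using x d by (intro end_err) auto
  have e1: "\<bar>S \<lfloor>R1\<rfloor> - R1^3/3\<bar> \<le> 13 * (real d + 1) * x" unfolding R1_def using x d by (intro end_err) auto
  have f: "\<bar>R1^3 - R0^3 - ((real d + 1) * sqrt (real d + 1) - real d * sqrt (real d)) * (x * sqrt x)\<bar>
         \<le> 50 * (real d + 1) * x" unfolding R0_def R1_def using F_diff[OF x d] .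
  have pos: "0 \<le> (real d + 1) * x" using x by simp
  have key: "\<And>A B P Q c y E::real. \<bar>B - P/3\<bar> \<le> 13*E \<Longrightarrow> \<bar>A - Q/3\<bar> \<le> 13*E \<Longrightarrow> \<bar>Q - P - c*y\<bar> \<le> 50*E \<Longrightarrow> 0 \<le> E
     \<Longrightarrow> \<bar>(A - B) - c/3*y\<bar> \<le> 100*E"
    by (simp add: abs_le_iff)
  have "\<bar>(S \<lfloor>R1\<rfloor> - S \<lfloor>R0\<rfloor>) - ((real d + 1) * sqrt (real d + 1) - real d * sqrt (real d)) / 3 * (x * sqrt x)\<bar>
      \<le> 100 * ((real d + 1) * x)"
    by (rule key[OF e0[unfolded mult.assoc[of 13]] e1[unfolded mult.assoc[of 13]] f[unfolded mult.assoc[of 50]] pos])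
  then show "\<bar>(\<Sum>k\<in>{K d x<..K (d+1) x}. (real_of_int k)^2)
      - ((real d + 1) * sqrt (real d + 1) - real d * sqrt (real d)) / 3 * x powr (3/2)\<bar>
    \<le> 100 * (real d + 1) * x"
    unfolding sum pw by (simp only: mult.assoc)
qed

end
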